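(* With the notation of the context, let $\mathcal{P}$ be a unital partition of $G=\mu_{p^n}$ ($p$ an odd prime) and $0\le k\le n$ such that $\mathcal{P}_k\cap\mathcal{P}_l=\emptyset$ for all $l\ne k$. Then $B_{i,k}=A_{i,k}$ for all $i$.
   Context: A unital partition of a finite commutative group $G$ is a partition $G=\{1\}\sqcup A_0\sqcup\dots\sqcup A_s$ such that, with $a_i=\sum_{x\in A_i}x\in\mathbb{Z}[G]$, the $\mathbb{Z}$-span of $1$ and the $a_i$ is closed under multiplication in $\mathbb{Z}[G]$. Fix $\alpha$ an integer generating $(\mathbb{Z}/p^n\mathbb{Z})^\times$. $B_k=\{x^{p^k}\mid x\text{ a generator of }G\}$, $\mathcal{P}_k=\{A\in\mathcal{P}\mid A\cap B_k\neq\emptyset\}$. Fix $A\in\mathcal{P}_k$, $y\in A\cap B_k$; $u_k$ is the smallest positive integer with $y^{\alpha^{u_k}}\in A$, $\beta_k=\alpha^{u_k}$, $r_k+1=\phi(p^{n-k})/u_k$. For $X\subseteq G$, $X^m=\{x^m:x\in X\}$. $A_{i,k}=A^{\alpha^i}$, $B_{0,k}=\{y,y^{\beta_k},\dots,y^{\beta_k^{r_k}}\}$, $B_{i,k}=B_{0,k}^{\alpha^i}$. *)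

theory Defs
  imports "HOL-Number_Theory.Number_Theory"
begin

text \<open>The group G = mu_(p^n), realised as the complex p^n-th roots of unity.\<close>
definition mu :: "nat \<Rightarrow> complex set" where
  "mu m = {z. z ^ m = 1}"

text \<open>Multiplication in the group ring Z[G]; elements are functions G -> int (zero outside G).\<close>
definition gr_mult :: "complex set \<Rightarrow> (complex \<Rightarrow> int) \<Rightarrow> (complex \<Rightarrow> int) \<Rightarrow> (complex \<Rightarrow> int)" where
  "gr_mult G f g = (\<lambda>z. if z \<in> G then (\<Sum>x\<in>G. f x * g (z / x)) else 0)"

text \<open>Z-span of the identity element 1 and the class sums a_A (A in P).\<close>
definition zspan :: "complex set set \<Rightarrow> (complex \<Rightarrow> int) set" where
  "zspan P = {f. \<exists>(c0::int) (c::complex set \<Rightarrow> int).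
      f = (\<lambda>z. c0 * of_bool (z = 1) + (\<Sum>A\<in>P. c A * of_bool (z \<in> A)))}"

text \<open>P is the set of non-trivial parts A_0,...,A_s, so that G = {1} + A_0 + ... + A_s.\<close>
definition unital_partition :: "complex set \<Rightarrow> complex set set \<Rightarrow> bool" where
  "unital_partition G P \<longleftrightarrow>
     (\<forall>A\<in>P. A \<noteq> {}) \<and> (\<forall>A\<in>P. \<forall>B\<in>P. A \<noteq> B \<longrightarrow> A \<inter> B = {}) \<and> \<Union>P = G - {1} \<and>
     (\<forall>f\<in>zspan P. \<forall>g\<in>zspan P. gr_mult G f g \<in> zspan P)"

definition is_generator :: "complex set \<Rightarrow> complex \<Rightarrow> bool" where
  "is_generator G x \<longleftrightarrow> x \<in> G \<and> (\<forall>z\<in>G. \<exists>j::nat. z = x ^ j)"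

definition Bset :: "complex set \<Rightarrow> nat \<Rightarrow> nat \<Rightarrow> complex set" where
  "Bset G p k = {x ^ (p ^ k) | x. is_generator G x}"

definition Pset :: "complex set \<Rightarrow> complex set set \<Rightarrow> nat \<Rightarrow> nat \<Rightarrow> complex set set" where
  "Pset G P p k = {A \<in> P. A \<inter> Bset G p k \<noteq> {}}"

definition set_pow :: "complex set \<Rightarrow> int \<Rightarrow> complex set" where
  "set_pow X m = (\<lambda>x. x powi m) ` X"

definition generates_units :: "nat \<Rightarrow> int \<Rightarrow> bool" where
  "generates_units m \<alpha> \<longleftrightarrow> coprime \<alpha> (int m) \<and>
     (\<forall>b::int. coprime b (int m) \<longrightarrow> (\<exists>i::nat. [\<alpha> ^ i = b] (mod int m)))"

end

theory Submission
  imports Defs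
begin

lemma funpow_gcd_fix:
  assumes "(f^^a) x = x" "(f^^b) x = x" "a \<noteq> 0"
  shows "(f^^(gcd a b)) x = x"
proof -
  have m: "(f^^(a*k)) x = x" for k
    by (induction k) (auto simp: funpow_add assms(1) simp del: funpow.simps)
  have mb: "(f^^(b*k)) x = x" for k
    by (induction k) (auto simp: funpow_add assms(2) simp del: funpow.simps)
  obtain s t where st: "a*s = b*t + gcd a b" using bezout_nat[OF assms(3)] by blast
  have "x = (f^^(a*s)) x" using m by simp
  also have "\<dots> = (f^^(gcd a b)) ((f^^(b*t)) x)" by (simp only: st add.commute[of "b*t"] funpow_add o_apply)
  also have "\<dots> = (f^^(gcd a b)) x" using mb by simp
  finally show ?thesis by simp
qed

lemma card_mod_prime_action:
  fixes f :: "'a \<Rightarrow> 'a"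
  assumes "prime q" "finite S" "f ` S \<subseteq> S" "\<And>x. x \<in> S \<Longrightarrow> (f^^q) x = x"
  shows "[card S = card {x\<in>S. f x = x}] (mod q)"
  using assms(2-4)
proof (induction "card S" arbitrary: S rule: less_induct)
  case less
  show ?case
  proof (cases "\<forall>x\<in>S. f x = x")
    case True
    then have "{x\<in>S. f x = x} = S" by auto
    then show ?thesis by simp
  next
    case False
    then obtain x where x: "x \<in> S" "f x \<noteq> x" by blast
    have q0: "q > 1" using assms(1) prime_gt_1_nat by blast
    have fS: "(f^^i) s \<in> S" if "s \<in> S" for i s
      using that less.prems(2) by (induction i) auto
    define Orb where "Orb = (\<lambda>i. (f^^i) x) ` {..<q}"
    have OS: "Orb \<subseteq> S" using fS x unfolding Orb_def by auto
    have nofix: "f ((f^^i) x) \<noteq> (f^^i) x" for i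
    proof
      assume h: "f ((f^^i) x) = (f^^i) x"
      have fx: "(f^^j) ((f^^i) x) = (f^^i) x" for j
        by (induction j) (use h in auto)
      define c where "c = q - i mod q"
      have c: "i mod q + c = q" unfolding c_def using q0 by (simp add: le_add_diff_inverse less_imp_le_nat)
      have per: "(f^^(q*k)) x = x" for k
        by (induction k) (auto simp: funpow_add less.prems(3)[OF x(1)] simp del: funpow.simps)
      have "(f^^i) x = (f^^(i mod q)) x"
      proof -
        have "(f^^i) x = (f^^(i mod q + q*(i div q))) x" by simp
        also have "\<dots> = (f^^(i mod q)) ((f^^(q*(i div q))) x)" by (simp only: funpow_add o_apply)
        finally have "(f^^i) x = (f^^(i mod q)) ((f^^(q*(i div q))) x)" .
        thus ?thesis using per by simp
      qed
      then have "(f^^c) ((f^^i) x) = (f^^(c + i mod q)) x" by (simp add: funpow_add)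
      also have "\<dots> = x" using c less.prems(3)[OF x(1)] by (simp add: add.commute)
      finally have "x = (f^^i) x" using fx by simp
      then have "f x = x" using h by simp
      thus False using x by simp
    qed
    have inj: "inj_on (\<lambda>i. (f^^i) x) {..<q}"
    proof (rule inj_onI, rule ccontr)
      fix a b assume ab: "a \<in> {..<q}" "b \<in> {..<q}" "(f^^a) x = (f^^b) x" "a \<noteq> b"
      have gen: "\<exists>d. 0 < d \<and> d < q \<and> (f^^d) x = x" if "a' < b'" "b' < q" "(f^^a') x = (f^^b') x" for a' b'
      proof -
        have "(f^^(q - b' + a')) x = (f^^(q-b')) ((f^^a') x)" by (simp add: funpow_add)
        also have "\<dots> = (f^^(q-b')) ((f^^b') x)" using that by simp
        also have "\<dots> = (f^^(q - b' + b')) x" by (simp only: funpow_add o_apply)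
        also have "\<dots> = (f^^q) x" using that by simp
        also have "\<dots> = x" using less.prems(3)[OF x(1)] .
        finally show ?thesis using that by (intro exI[of _ "q - b' + a'"]) auto
      qed
      obtain d where d: "0 < d" "d < q" "(f^^d) x = x"
        using ab gen[of a b] gen[of b a] by (cases "a < b") auto
      have "coprime d q" using d assms(1)
      proof -
        have "\<not> q dvd d" using d by (auto dest: dvd_imp_le)
        then have "coprime q d" using prime_imp_coprime[of q d] assms(1) by blast
        thus ?thesis by (simp add: coprime_commute)
      qed
      then have "gcd d q = 1" by simp
      with funpow_gcd_fix[OF d(3) less.prems(3)[OF x(1)]] d have "(f^^1) x = x" by simp
      thus False using x by simp
    qed
    have cardO: "card Orb = q" unfolding Orb_def using card_image[OF inj] by simp
    have fSO: "f ` (S - Orb) \<subseteq> S - Orb"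
    proof
      fix z assume "z \<in> f ` (S - Orb)"
      then obtain s where s: "s \<in> S" "s \<notin> Orb" "z = f s" by auto
      have "z \<notin> Orb"
      proof
        assume "z \<in> Orb"
        then obtain i where i: "i < q" "f s = (f^^i) x" using s unfolding Orb_def by auto
        have "s = (f^^(q - 1)) (f s)"
        proof -
          have "(f^^(q-1)) (f s) = (f^^q) s"
          proof -
            have "q = Suc (q-1)" using q0 by simp
            then have "(f^^q) s = (f^^(q-1)) (f s)" by (metis funpow_Suc_right o_apply)
            thus ?thesis by simp
          qed
          thus ?thesis using less.prems(3)[OF s(1)] by simp
        qed
        also have "\<dots> = (f^^((q-1+i) mod q)) x"
        proof -
          have per: "(f^^(q*k)) x = x" for k
            by (induction k) (auto simp: funpow_add less.prems(3)[OF x(1)] simp del: funpow.simps)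
          have "(f^^(q-1)) (f s) = (f^^(q-1)) ((f^^i) x)" using i by simp
          also have "\<dots> = (f^^(q-1+i)) x" by (simp only: funpow_add o_apply)
          also have "\<dots> = (f^^((q-1+i) mod q + q*((q-1+i) div q))) x" by simp
          also have "\<dots> = (f^^((q-1+i) mod q)) ((f^^(q*((q-1+i) div q))) x)"
            by (simp only: funpow_add o_apply)
          finally show ?thesis using per by simp
        qed
        finally have "s \<in> Orb" unfolding Orb_def using q0 by auto
        thus False using s by simp
      qed
      thus "z \<in> S - Orb" using s less.prems(2) by auto
    qed
    have fixeq: "{y\<in>S - Orb. f y = y} = {y\<in>S. f y = y}"
      using nofix unfolding Orb_def by auto
    have lt: "card (S - Orb) < card S"
    proof -
      have "finite Orb" using OS less.prems(1) finite_subset by blast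
      then have "card (S - Orb) = card S - card Orb" using OS card_Diff_subset by blast
      moreover have "card Orb \<le> card S" using card_mono[OF less.prems(1) OS] .
      ultimately show ?thesis using cardO q0 by linarith
    qed
    have IH: "[card (S - Orb) = card {y\<in>S - Orb. f y = y}] (mod q)"
      using less.hyps[OF lt] fSO less.prems by auto
    have "card S = card (S - Orb) + q"
    proof -
      have "finite Orb" using OS less.prems(1) finite_subset by blast
      then have "card (S - Orb) = card S - card Orb" using OS card_Diff_subset by blast
      moreover have "card Orb \<le> card S" using card_mono[OF less.prems(1) OS] .
      ultimately show ?thesis using cardO by linarith
    qed
    then have "[card S = card (S - Orb)] (mod q)" by (simp add: cong_def)
    then show ?thesis using IH fixeq by (metis cong_trans)
  qed
qed

lemma mu_mult: "x \<in> mu N \<Longrightarrow> y \<in> mu N \<Longrightarrow> x * y \<in> mu N"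
  by (simp add: mu_def power_mult_distrib)
lemma mu_div: "x \<in> mu N \<Longrightarrow> y \<in> mu N \<Longrightarrow> x / y \<in> mu N"
  by (simp add: mu_def power_divide)
lemma mu_one: "1 \<in> mu N" by (simp add: mu_def)
lemma mu_nz: "N > 0 \<Longrightarrow> x \<in> mu N \<Longrightarrow> x \<noteq> 0"
  by (auto simp: mu_def power_0_left)
lemma mu_finite: "N > 0 \<Longrightarrow> finite (mu N)"
  unfolding mu_def by (rule finite_roots_unity) simp
lemma mu_card: "N > 0 \<Longrightarrow> card (mu N) = N"
  unfolding mu_def by (rule card_roots_unity_eq)
lemma mu_pow: "x \<in> mu N \<Longrightarrow> x ^ m \<in> mu N"
proof -
  assume "x \<in> mu N"
  have "(x ^ m) ^ N = (x ^ N) ^ m" by (simp add: power_mult[symmetric] mult.commute)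
  thus ?thesis using \<open>x \<in> mu N\<close> by (simp add: mu_def)
qed

lemma up_finite:
  assumes "unital_partition (mu N) P" "N > 0"
  shows "finite P"
proof -
  have "P \<subseteq> Pow (mu N)" using assms(1) unfolding unital_partition_def by auto
  thus ?thesis using mu_finite[OF assms(2)] by (meson finite_Pow_iff finite_subset)
qed

lemma up_sub: "unital_partition G P \<Longrightarrow> B \<in> P \<Longrightarrow> B \<subseteq> G - {1}"
  unfolding unital_partition_def by auto

lemma zspan_val:
  assumes "unital_partition G P" "finite P" "f \<in> zspan P" "D \<in> P"
  shows "\<exists>c. \<forall>z\<in>D. f z = c"
proof -
  obtain c0 c where f: "f = (\<lambda>z. c0 * of_bool (z = 1) + (\<Sum>A\<in>P. c A * of_bool (z \<in> A)))"
    using assms(3) unfolding zspan_def by blast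
  have "f z = c D" if "z \<in> D" for z
  proof -
    have z1: "z \<noteq> 1" using up_sub[OF assms(1,4)] that by auto
    have "(\<Sum>A\<in>P. c A * of_bool (z \<in> A)) = (\<Sum>A\<in>P. if A = D then c D else 0)"
    proof (rule sum.cong)
      fix A assume "A \<in> P"
      then show "c A * of_bool (z \<in> A) = (if A = D then c D else 0)"
        using assms(1,4) that unfolding unital_partition_def by auto
    qed simp
    also have "\<dots> = c D" using assms(2,4) by simp
    finally show ?thesis using f z1 by simp
  qed
  thus ?thesis by blast
qed

lemma ind_zspan:
  assumes "finite P" "C \<in> P"
  shows "(\<lambda>z. of_bool (z \<in> C)) \<in> zspan P"
proof -
  have "(\<lambda>z. of_bool (z \<in> C)) = (\<lambda>z. 0 * of_bool (z = 1) + (\<Sum>A\<in>P. (of_bool (A = C)::int) * of_bool (z \<in> A)))"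
  proof
    fix z
    have "(\<Sum>A\<in>P. (of_bool (A = C)::int) * of_bool (z \<in> A)) = (\<Sum>A\<in>P. if A = C then of_bool (z \<in> C) else 0)"
      by (rule sum.cong) auto
    also have "\<dots> = of_bool (z \<in> C)" using assms by simp
    finally show "(of_bool (z \<in> C)::int) = 0 * of_bool (z = 1) + (\<Sum>A\<in>P. (of_bool (A = C)::int) * of_bool (z \<in> A))" by simp
  qed
  thus ?thesis unfolding zspan_def mem_Collect_eq
    by (rule exI[of _ 0, OF exI[of _ "\<lambda>A. of_bool (A = C)"]])
qed

lemma delta_zspan: "(\<lambda>z. of_bool (z = 1)) \<in> zspan P"
proof -
  have "(\<lambda>z. of_bool (z = 1)) = (\<lambda>z. 1 * of_bool (z = 1) + (\<Sum>A\<in>P. (0::int) * of_bool (z \<in> A)))"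
    by simp
  thus ?thesis unfolding zspan_def mem_Collect_eq
    by (rule exI[of _ 1, OF exI[of _ "\<lambda>A. 0"]])
qed

fun pw :: "complex set \<Rightarrow> complex set \<Rightarrow> nat \<Rightarrow> complex \<Rightarrow> int" where
  "pw G C 0 = (\<lambda>z. of_bool (z = 1))"
| "pw G C (Suc m) = gr_mult G (\<lambda>z. of_bool (z \<in> C)) (pw G C m)"

lemma pw_zspan:
  assumes "unital_partition G P" "finite P" "C \<in> P"
  shows "pw G C m \<in> zspan P"
proof (induction m)
  case 0 then show ?case using delta_zspan by simp
next
  case (Suc m)
  then show ?case using assms ind_zspan[OF assms(2,3)] unfolding unital_partition_def by simp
qed

definition Lst :: "complex set \<Rightarrow> nat \<Rightarrow> complex \<Rightarrow> complex list set" where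
  "Lst C m z = {xs. length xs = m \<and> set xs \<subseteq> C \<and> prod_list xs = z}"

lemma Lst_finite: "finite C \<Longrightarrow> finite (Lst C m z)"
  unfolding Lst_def by (rule finite_subset[OF _ finite_lists_length_eq[of C m]]) auto

lemma pw_count:
  assumes "N > 0" "C \<subseteq> mu N" "z \<in> mu N"
  shows "pw (mu N) C m z = int (card (Lst C m z))"
  using assms(3)
proof (induction m arbitrary: z)
  case 0
  have "Lst C 0 z = (if z = 1 then {[]} else {})" unfolding Lst_def by auto
  then show ?case by simp
next
  case (Suc m)
  have fC: "finite C" using finite_subset[OF assms(2) mu_finite[OF assms(1)]] .
  have "pw (mu N) C (Suc m) z = (\<Sum>x\<in>mu N. of_bool (x \<in> C) * pw (mu N) C m (z / x))"
    using Suc.prems by (simp add: gr_mult_def)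
  also have "\<dots> = (\<Sum>x\<in>C. pw (mu N) C m (z / x))"
  proof -
    have "(\<Sum>x\<in>mu N. of_bool (x \<in> C) * pw (mu N) C m (z / x)) = (\<Sum>x\<in>mu N. if x \<in> C then pw (mu N) C m (z / x) else 0)"
      by (rule sum.cong) auto
    also have "\<dots> = (\<Sum>x\<in>mu N \<inter> C. pw (mu N) C m (z / x))"
      using mu_finite[OF assms(1)] by (simp add: sum.inter_restrict)
    also have "mu N \<inter> C = C" using assms(2) by auto
    finally show ?thesis .
  qed
  also have "\<dots> = (\<Sum>x\<in>C. int (card (Lst C m (z / x))))"
    using Suc.IH Suc.prems assms(2) mu_div by (intro sum.cong) auto
  also have "\<dots> = int (\<Sum>x\<in>C. card (Lst C m (z / x)))" by simp
  also have "(\<Sum>x\<in>C. card (Lst C m (z / x))) = (\<Sum>x\<in>C. card ((Cons x) ` Lst C m (z / x)))"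
    by (intro sum.cong refl card_image[symmetric]) (auto simp: inj_on_def)
  also have "\<dots> = card (\<Union>x\<in>C. (Cons x) ` Lst C m (z / x))"
    using fC by (intro card_UN_disjoint[symmetric]) (auto intro: Lst_finite)
  also have "(\<Union>x\<in>C. (Cons x) ` Lst C m (z / x)) = Lst C (Suc m) z"
  proof (intro equalityI subsetI)
    fix xs assume "xs \<in> (\<Union>x\<in>C. (Cons x) ` Lst C m (z / x))"
    then obtain x ys where "x \<in> C" "ys \<in> Lst C m (z / x)" "xs = x # ys" by auto
    moreover have "x \<noteq> 0" using \<open>x \<in> C\<close> assms mu_nz by auto
    ultimately show "xs \<in> Lst C (Suc m) z" unfolding Lst_def by auto
  next
    fix xs assume xs: "xs \<in> Lst C (Suc m) z"
    then obtain x ys where xy: "xs = x # ys" unfolding Lst_def by (cases xs) auto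
    have "x \<in> C" using xs xy unfolding Lst_def by auto
    moreover have "x \<noteq> 0" using \<open>x \<in> C\<close> assms mu_nz by auto
    ultimately have "ys \<in> Lst C m (z / x)" using xs xy unfolding Lst_def by (auto simp: field_simps)
    then show "xs \<in> (\<Union>x\<in>C. (Cons x) ` Lst C m (z / x))" using xy \<open>x \<in> C\<close> by auto
  qed
  finally show ?case .
qed

lemma rot_fix: "ys @ [x] = x # ys \<Longrightarrow> ys = replicate (length ys) x"
  by (induction ys) auto

lemma prod_list_rotate1: "prod_list (rotate1 xs) = prod_list (xs::complex list)"
  by (cases xs) (auto simp: mult.commute)

lemma Lst_mod:
  assumes "N > 0" "C \<subseteq> mu N" "prime q" "inj_on (\<lambda>x. x ^ q) (mu N)"
  shows "[card (Lst C q z) = of_bool (z \<in> (\<lambda>x. x ^ q) ` C)] (mod q)"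
proof -
  have fC: "finite C" using finite_subset[OF assms(2) mu_finite[OF assms(1)]] .
  have q1: "q \<ge> 1" using assms(3) prime_ge_1_nat by blast
  have "[card (Lst C q z) = card {xs \<in> Lst C q z. rotate1 xs = xs}] (mod q)"
  proof (rule card_mod_prime_action[OF assms(3) Lst_finite[OF fC]])
    show "rotate1 ` Lst C q z \<subseteq> Lst C q z"
      unfolding Lst_def by (auto simp: prod_list_rotate1)
    fix xs assume "xs \<in> Lst C q z"
    then have "length xs = q" unfolding Lst_def by auto
    then show "(rotate1 ^^ q) xs = xs" by (simp add: rotate_def[symmetric])
  qed
  also have "{xs \<in> Lst C q z. rotate1 xs = xs} = (\<lambda>x. replicate q x) ` {x \<in> C. x ^ q = z}"
  proof (intro equalityI subsetI)
    fix xs assume xs: "xs \<in> {xs \<in> Lst C q z. rotate1 xs = xs}"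
    then obtain x ys where xy: "xs = x # ys" using q1 unfolding Lst_def by (cases xs) auto
    then have "ys @ [x] = x # ys" using xs by auto
    then have "ys = replicate (length ys) x" by (rule rot_fix)
    moreover have "length xs = q" using xs unfolding Lst_def by auto
    ultimately have "xs = replicate q x" using xy by (metis length_Cons replicate_Suc)
    moreover have "x \<in> C" using xs xy unfolding Lst_def by auto
    moreover have "x ^ q = z" using xs \<open>xs = replicate q x\<close> unfolding Lst_def by auto
    ultimately show "xs \<in> (\<lambda>x. replicate q x) ` {x \<in> C. x ^ q = z}" by auto
  next
    fix xs assume "xs \<in> (\<lambda>x. replicate q x) ` {x \<in> C. x ^ q = z}"
    then obtain x where "x \<in> C" "x ^ q = z" "xs = replicate q x" by auto
    then show "xs \<in> {xs \<in> Lst C q z. rotate1 xs = xs}"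
    proof -
      obtain q' where q': "q = Suc q'" using q1 by (cases q) auto
      have "rotate1 xs = xs" using \<open>xs = replicate q x\<close> q' by (simp add: replicate_append_same)
      moreover have "xs \<in> Lst C q z" using \<open>x \<in> C\<close> \<open>x ^ q = z\<close> \<open>xs = replicate q x\<close> unfolding Lst_def by auto
      ultimately show ?thesis by simp
    qed
  qed
  also have "card \<dots> = card {x \<in> C. x ^ q = z}"
    by (rule card_image) (use q1 in \<open>auto simp: inj_on_def\<close>)
  also have "card {x \<in> C. x ^ q = z} = of_bool (z \<in> (\<lambda>x. x ^ q) ` C)"
  proof (cases "z \<in> (\<lambda>x. x ^ q) ` C")
    case True
    then obtain x where x: "x \<in> C" "z = x ^ q" by auto
    have "{x \<in> C. x ^ q = z} = {x}"
      using x assms(2,4) unfolding inj_on_def by auto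
    then show ?thesis using True by simp
  next
    case False
    then have e: "{x \<in> C. x ^ q = z} = {}" by auto
    show ?thesis unfolding e using False by simp
  qed
  finally show ?thesis .
qed

lemma schur_prime:
  assumes up: "unital_partition (mu N) P" and N: "N > 0" and C: "C \<in> P" and D: "D \<in> P"
    and q: "prime q" and inj: "inj_on (\<lambda>x. x ^ q) (mu N)"
    and z: "z \<in> D" "z \<in> (\<lambda>x. x ^ q) ` C" and w: "w \<in> D"
  shows "w \<in> (\<lambda>x. x ^ q) ` C"
proof -
  have fP: "finite P" using up_finite[OF up N] .
  have CG: "C \<subseteq> mu N" and DG: "D \<subseteq> mu N" using up_sub[OF up C] up_sub[OF up D] by auto
  obtain c where c: "\<forall>t\<in>D. pw (mu N) C q t = c"
    using zspan_val[OF up fP pw_zspan[OF up fP C] D] by blast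
  have "int (card (Lst C q z)) = int (card (Lst C q w))"
    using c z w pw_count[OF N CG] DG by (metis subsetD)
  then have eq: "card (Lst C q z) = card (Lst C q w)" by simp
  have "[of_bool (z \<in> (\<lambda>x. x ^ q) ` C) = (of_bool (w \<in> (\<lambda>x. x ^ q) ` C) :: nat)] (mod q)"
    using Lst_mod[OF N CG q inj, of z] Lst_mod[OF N CG q inj, of w] eq
    by (metis cong_sym cong_trans)
  moreover have "q > 1" using q prime_gt_1_nat by blast
  ultimately show ?thesis using z(2) by (cases "w \<in> (\<lambda>x. x ^ q) ` C") (auto simp: cong_def)
qed

lemma powi_cong:
  fixes y :: complex
  assumes "y \<noteq> 0" "y ^ K = 1" "[a = b] (mod int K)"
  shows "y powi a = y powi b"
proof -
  obtain t where t: "b = a + int K * t" using assms(3) cong_iff_lin by blast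
  have "y powi (int K * t) = 1"
    by (simp add: power_int_mult assms(2))
  then show ?thesis using t assms(1) by (simp add: power_int_add)
qed

lemma pow_cong_nat:
  fixes y :: complex
  assumes "y ^ K = 1" "[a = b] (mod K)"
  shows "y ^ a = y ^ b"
proof -
  have "y ^ a = y ^ (a mod K + K * (a div K))" by simp
  also have "\<dots> = y ^ (a mod K)" by (simp only: power_add power_mult assms(1) power_one mult_1_right)
  also have "a mod K = b mod K" using assms(2) by (simp add: cong_def)
  also have "y ^ (b mod K) = y ^ (b mod K + K * (b div K))" by (simp only: power_add power_mult assms(1) power_one mult_1_right)
  also have "\<dots> = y ^ b" by simp
  finally show ?thesis .
qed

lemma powi_nat:
  assumes "N > 0" "y \<in> mu N"
  shows "y powi m = y ^ nat (m mod int N)"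
proof -
  have "y powi m = y powi (m mod int N)"
    using assms by (intro powi_cong[of _ N]) (auto simp: mu_def mu_nz cong_def)
  also have "m mod int N = int (nat (m mod int N))" using assms(1) by simp
  finally show ?thesis by (simp only: power_int_of_nat)
qed

lemma powi_mu: "N > 0 \<Longrightarrow> y \<in> mu N \<Longrightarrow> y powi m \<in> mu N"
  using powi_nat mu_pow by metis

lemma powi_inj:
  assumes "N > 0" "y \<in> mu N" "w \<in> mu N" "coprime m (int N)" "y powi m = w powi m"
  shows "y = w"
proof -
  obtain m' where m': "[m * m' = 1] (mod int N)" using cong_solve_coprime_int[OF assms(4)] by blast
  have yn: "y \<noteq> 0" "y ^ N = 1" "w \<noteq> 0" "w ^ N = 1" using assms mu_nz by (auto simp: mu_def)
  have "y = y powi 1" by simp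
  also have "\<dots> = y powi (m * m')" using powi_cong[OF yn(1,2) cong_sym[OF m']] .
  also have "\<dots> = (w powi m) powi m'" by (simp add: power_int_mult assms(5))
  also have "\<dots> = w powi (m * m')" by (simp add: power_int_mult)
  also have "\<dots> = w powi 1" using powi_cong[OF yn(3,4) m'] .
  also have "\<dots> = w" by simp
  finally show ?thesis .
qed

definition closedP :: "complex set set \<Rightarrow> complex set \<Rightarrow> bool" where
  "closedP P X \<longleftrightarrow> (\<forall>D\<in>P. D \<inter> X \<noteq> {} \<longrightarrow> D \<subseteq> X)"

lemma closed_prime:
  assumes up: "unital_partition (mu N) P" and N: "N > 0" and X: "X \<subseteq> mu N" "closedP P X"
    and q: "prime q" "coprime q N"
  shows "closedP P ((\<lambda>x. x ^ q) ` X)"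
  unfolding closedP_def
proof (intro ballI impI subsetI)
  fix D w assume D: "D \<in> P" "D \<inter> (\<lambda>x. x ^ q) ` X \<noteq> {}" and w: "w \<in> D"
  have inj: "inj_on (\<lambda>x. x ^ q) (mu N)"
  proof (rule inj_onI)
    fix a b assume "a \<in> mu N" "b \<in> mu N" "a ^ q = b ^ q"
    then show "a = b" using powi_inj[OF N, of a b "int q"] q(2) by (simp add: coprime_int_iff)
  qed
  obtain z x where zx: "z \<in> D" "x \<in> X" "z = x ^ q" using D by auto
  have "x \<noteq> 1" using zx up_sub[OF up D(1)] by auto
  then have "x \<in> \<Union>P" using X zx up unfolding unital_partition_def by auto
  then obtain C where C: "C \<in> P" "x \<in> C" by auto
  have CX: "C \<subseteq> X" using X(2) C zx unfolding closedP_def by blast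
  have "w \<in> (\<lambda>x. x ^ q) ` C"
    using schur_prime[OF up N C(1) D(1) q(1) inj zx(1) _ w] C zx by auto
  then show "w \<in> (\<lambda>x. x ^ q) ` X" using CX by auto
qed

lemma closed_nat:
  assumes up: "unital_partition (mu N) P" and N: "N > 1"
  shows "X \<subseteq> mu N \<Longrightarrow> closedP P X \<Longrightarrow> coprime M N \<Longrightarrow> closedP P ((\<lambda>x. x ^ M) ` X)"
proof (induction M arbitrary: X rule: less_induct)
  case (less M)
  show ?case
  proof (cases "M = 1")
    case True then show ?thesis using less.prems by simp
  next
    case False
    have "M \<noteq> 0"
    proof
      assume "M = 0" then have "N = 1" using less.prems(3) by simp
      with N show False by simp
    qed
    obtain q where q: "prime q" "q dvd M" using prime_factor_nat[OF False] by blast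
    obtain M' where M': "M = q * M'" using q(2) by blast
    have "M' < M" using M' \<open>M \<noteq> 0\<close> prime_gt_1_nat[OF q(1)] by simp
    have cM': "coprime M' N" "coprime q N" using less.prems(3) M' by auto
    have c1: "closedP P ((\<lambda>x. x ^ M') ` X)" using less.IH[OF \<open>M' < M\<close> less.prems(1,2) cM'(1)] .
    have s1: "(\<lambda>x. x ^ M') ` X \<subseteq> mu N" using less.prems(1) mu_pow by blast
    have "closedP P ((\<lambda>x. x ^ q) ` ((\<lambda>x. x ^ M') ` X))"
      using closed_prime[OF up _ s1 c1 q(1) cM'(2)] N by simp
    also have "(\<lambda>x. x ^ q) ` ((\<lambda>x. x ^ M') ` X) = (\<lambda>x. x ^ M) ` X"
      by (simp add: image_image M' power_mult[symmetric] mult.commute)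
    finally show ?thesis .
  qed
qed

lemma closed_int:
  assumes up: "unital_partition (mu N) P" and N: "N > 1" and X: "X \<subseteq> mu N" "closedP P X"
    and m: "coprime m (int N)"
  shows "closedP P (set_pow X m)"
proof -
  have "set_pow X m = (\<lambda>x. x ^ nat (m mod int N)) ` X"
    unfolding set_pow_def using X(1) N powi_nat[of N] by (intro image_cong refl) auto
  moreover have "coprime (nat (m mod int N)) N"
  proof -
    have "coprime (m mod int N) (int N)" using m N by simp
    moreover have "m mod int N = int (nat (m mod int N))" using N by simp
    ultimately show ?thesis by (metis coprime_int_iff)
  qed
  ultimately show ?thesis using closed_nat[OF up N X] by simp
qed

lemma gen_basic:
  assumes "N > 0" "is_generator (mu N) w"
  shows "w \<in> mu N" "w \<noteq> 0" "w ^ N = 1"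
  using assms mu_nz by (auto simp: is_generator_def mu_def)

lemma gen_ord:
  assumes N: "N > 0" and g: "is_generator (mu N) w" and m: "w ^ m = 1"
  shows "N dvd m"
proof -
  note wb = gen_basic[OF N g]
  define d where "d = gcd N m"
  obtain s t where st: "N * s = m * t + d" using bezout_nat[of N m] N unfolding d_def by auto
  have "1 = w ^ (N * s)" by (simp add: power_mult wb(3))
  also have "\<dots> = w ^ (m * t) * w ^ d" by (simp add: st power_add)
  also have "w ^ (m * t) = 1" by (simp add: power_mult m)
  finally have wd: "w ^ d = 1" by simp
  have d0: "d > 0" using N unfolding d_def by simp
  have "mu N \<subseteq> (\<lambda>j. w ^ j) ` {..<d}"
  proof
    fix z assume "z \<in> mu N"
    then obtain j where j: "z = w ^ j" using g unfolding is_generator_def by blast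
    have "w ^ j = w ^ (j mod d)" using pow_cong_nat[OF wd, of j "j mod d"] by (simp add: cong_def)
    then show "z \<in> (\<lambda>j. w ^ j) ` {..<d}" using j d0 by auto
  qed
  then have "card (mu N) \<le> card ((\<lambda>j. w ^ j) ` {..<d})" by (intro card_mono) auto
  also have "\<dots> \<le> d" using card_image_le[of "{..<d}" "\<lambda>j. w ^ j"] by simp
  finally have "N \<le> d" using mu_card[OF N] by simp
  moreover have "d dvd N" unfolding d_def by simp
  ultimately have "d = N" using N by (simp add: dvd_imp_le le_antisym)
  then show ?thesis unfolding d_def by (metis gcd_dvd2)
qed

lemma gen_pow_eq:
  assumes N: "N > 0" and g: "is_generator (mu N) w" and e: "w ^ a = w ^ b"
  shows "[a = b] (mod N)"
proof -
  note wb = gen_basic[OF N g]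
  have *: "[a = b] (mod N)" if "a \<le> b" "w ^ a = w ^ b" for a b
  proof -
    have "w ^ a * w ^ (b - a) = w ^ (a + (b - a))" by (simp only: power_add)
    also have "a + (b - a) = b" using that by simp
    finally have "w ^ a * w ^ (b - a) = w ^ a * 1" using that by simp
    then have "w ^ (b - a) = 1" using wb(2) by simp
    then have "N dvd b - a" using gen_ord[OF N g] by blast
    then have "b mod N = a mod N" using mod_eq_dvd_iff_nat[OF that(1)] by blast
    then show ?thesis by (simp add: cong_def)
  qed
  show ?thesis
  proof (cases "a \<le> b")
    case True then show ?thesis using *[of a b] e by blast
  next
    case False then show ?thesis using *[of b a] e cong_sym[of b a N] by simp
  qed
qed

lemma gen_pow_gen:
  assumes N: "N > 0" and g: "is_generator (mu N) w" and e: "coprime e N"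
  shows "is_generator (mu N) (w ^ e)"
  unfolding is_generator_def
proof (intro conjI ballI)
  note wb = gen_basic[OF N g]
  show "w ^ e \<in> mu N" using wb mu_pow by blast
  fix z assume "z \<in> mu N"
  then obtain j where j: "z = w ^ j" using g unfolding is_generator_def by blast
  obtain t where t: "[e * t = Suc 0] (mod N)" using cong_solve_coprime_nat[OF e] by blast
  have "w ^ (e * t * j) = w ^ (Suc 0 * j)" using pow_cong_nat[OF wb(3) cong_mult[OF t cong_refl[of j]]] .
  moreover have "(w ^ e) ^ (t * j) = w ^ (e * t * j)" by (simp only: power_mult mult.assoc)
  ultimately have "z = (w ^ e) ^ (t * j)" using j by simp
  then show "\<exists>j. z = (w ^ e) ^ j" by blast
qed

theorem corollary3p9:
  fixes p n k :: nat and \<alpha> :: int and P :: "complex set set" and A :: "complex set" and y :: complex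
  assumes "prime p" and "odd p"
    and "generates_units (p ^ n) \<alpha>"
    and "unital_partition (mu (p ^ n)) P"
    and "k \<le> n"
    and "\<forall>l\<le>n. l \<noteq> k \<longrightarrow> Pset (mu (p ^ n)) P p k \<inter> Pset (mu (p ^ n)) P p l = {}"
    and "A \<in> Pset (mu (p ^ n)) P p k"
    and "y \<in> A \<inter> Bset (mu (p ^ n)) p k"
  shows "let u = (LEAST u::nat. 0 < u \<and> y powi (\<alpha> ^ u) \<in> A);
             \<beta> = \<alpha> ^ u;
             r = totient (p ^ (n - k)) div u - 1;
             B0 = {y powi (\<beta> ^ j) | j. j \<le> r}
         in \<forall>i::nat. set_pow B0 (\<alpha> ^ i) = set_pow A (\<alpha> ^ i)"
proof -
  define N where "N = p ^ n"
  have p1: "p > 1" using assms(1) prime_gt_1_nat by blast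
  have N0: "N > 0" unfolding N_def using p1 by simp
  have up: "unital_partition (mu N) P" using assms(4) N_def by simp
  have hyp: "\<forall>l\<le>n. l \<noteq> k \<longrightarrow> Pset (mu N) P p k \<inter> Pset (mu N) P p l = {}" using assms(6) N_def by simp
  have AP: "A \<in> Pset (mu N) P p k" using assms(7) N_def by simp
  have yA: "y \<in> A" and yB: "y \<in> Bset (mu N) p k" using assms(8) N_def by auto
  obtain w where w: "is_generator (mu N) w" "y = w ^ (p ^ k)" using yB unfolding Bset_def by blast
  note wb = gen_basic[OF N0 w(1)]
  have AinP: "A \<in> P" using AP unfolding Pset_def by auto
  have AG: "A \<subseteq> mu N" and A1: "1 \<notin> A" using up_sub[OF up AinP] by auto
  have kn: "k < n"
  proof (rule ccontr)
    assume "\<not> k < n" then have "k = n" using assms(5) by simp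
    then have "y = 1" using w(2) wb(3) N_def by simp
    then show False using yA A1 by simp
  qed
  have N1: "N > 1" unfolding N_def using p1 kn by (intro one_less_power) auto
  define N' where "N' = p ^ (n - k)"
  have NN: "p ^ k * N' = N" unfolding N'_def N_def using kn by (simp add: power_add[symmetric])
  have N'1: "N' > 1" unfolding N'_def using p1 kn by (intro one_less_power) auto
  have yN': "y ^ N' = 1"
  proof -
    have "y ^ N' = w ^ (p ^ k * N')" using w(2) by (simp only: power_mult)
    thus ?thesis using NN wb(3) by simp
  qed
  have yG: "y \<in> mu N" using yA AG by auto
  have y0: "y \<noteq> 0" using mu_nz[OF N0 yG] .
  have yN: "y ^ N = 1" using yG by (simp add: mu_def)
  have cal: "coprime \<alpha> (int N)" using assms(3) N_def unfolding generates_units_def by simp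
  have gu: "\<And>b. coprime b (int N) \<Longrightarrow> \<exists>i::nat. [\<alpha> ^ i = b] (mod int N)"
    using assms(3) unfolding generates_units_def N_def by blast
  have calp: "coprime \<alpha> (int p)" using cal kn unfolding N_def by (simp add: of_nat_power)
  have calN': "coprime \<alpha> (int N')" using calp unfolding N'_def by (simp add: of_nat_power)
  define L where "L = totient N'"
  have L0: "L > 0" unfolding L_def using N'1 by simp
  have "residues (int N')" unfolding residues_def using N'1 by simp
  from residues.euler_theorem[OF this calN'] have eul: "[\<alpha> ^ L = 1] (mod int N')"
    unfolding L_def by simp
  have yL: "y powi (\<alpha> ^ L) = y" using powi_cong[OF y0 yN' eul] by simp
  have exu: "\<exists>u. 0 < u \<and> y powi (\<alpha> ^ u) \<in> A" using L0 yL yA by (intro exI[of _ L]) simp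
  define u where "u = (LEAST u::nat. 0 < u \<and> y powi (\<alpha> ^ u) \<in> A)"
  define \<beta> where "\<beta> = \<alpha> ^ u"
  have u0: "0 < u" and yb: "y powi \<beta> \<in> A"
    using LeastI_ex[OF exu] unfolding u_def \<beta>_def by auto
  have notl: "\<not> (0 < t \<and> y powi (\<alpha> ^ t) \<in> A)" if "t < u" for t
    using not_less_Least[OF that[unfolded u_def]] unfolding u_def .
  have cb: "coprime (\<beta> ^ j) (int N)" for j unfolding \<beta>_def using cal by simp
  have closedA: "closedP P A"
    unfolding closedP_def using up AinP unfolding unital_partition_def by blast
  have cl: "closedP P (set_pow A \<beta>)" using closed_int[OF up N1 AG closedA cb[of 1]] by simp
  have sub: "A \<subseteq> set_pow A \<beta>"
  proof -
    have "A \<inter> set_pow A \<beta> \<noteq> {}" using yb yA unfolding set_pow_def by auto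
    thus ?thesis using cl AinP unfolding closedP_def by blast
  qed
  have fA: "finite A" using finite_subset[OF AG mu_finite[OF N0]] .
  have Ab: "set_pow A \<beta> = A"
  proof -
    have "card (set_pow A \<beta>) \<le> card A" unfolding set_pow_def by (rule card_image_le[OF fA])
    moreover have "finite (set_pow A \<beta>)" unfolding set_pow_def using fA by simp
    ultimately show ?thesis using card_seteq[OF _ sub] by blast
  qed
  have Abj: "set_pow A (\<beta> ^ j) = A" for j
  proof (induction j)
    case 0 then show ?case unfolding set_pow_def by simp
  next
    case (Suc j)
    have "set_pow A (\<beta> ^ Suc j) = (\<lambda>x. x powi \<beta>) ` set_pow A (\<beta> ^ j)"
      unfolding set_pow_def image_image by (simp only: power_int_mult power_Suc2)
    also have "\<dots> = A" using Suc Ab unfolding set_pow_def by simp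
    finally show ?case .
  qed
  have bk: "v \<in> A" if vv: "v \<in> mu N" "v powi (\<beta> ^ q) \<in> A" for v q
  proof -
    obtain a where a: "a \<in> A" "v powi (\<beta> ^ q) = a powi (\<beta> ^ q)"
      using vv(2) Abj[of q] unfolding set_pow_def by blast
    have "v = a" using powi_inj[OF N0 vv(1) _ cb a(2)] a(1) AG by auto
    thus ?thesis using a by simp
  qed
  have key: "u dvd i" if iA: "y powi (\<alpha> ^ i) \<in> A" for i
  proof -
    define t where "t = i mod u"
    define q where "q = i div u"
    have iq: "i = t + u * q" unfolding t_def q_def by simp
    have "\<alpha> ^ i = \<alpha> ^ t * \<beta> ^ q"
      unfolding \<beta>_def iq by (simp only: power_add power_mult)
    then have e: "y powi (\<alpha> ^ i) = (y powi (\<alpha> ^ t)) powi (\<beta> ^ q)" by (simp only: power_int_mult)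
    have "(y powi (\<alpha> ^ t)) powi (\<beta> ^ q) \<in> A" using iA unfolding e .
    then have tA: "y powi (\<alpha> ^ t) \<in> A" by (rule bk[OF powi_mu[OF N0 yG]])
    have tu: "t < u" unfolding t_def using u0 by simp
    have "t = 0" using notl[OF tu] tA by simp
    thus ?thesis unfolding t_def by auto
  qed
  have uL: "u dvd L" using key yL yA by simp
  define r where "r = L div u - 1"
  define B0 where "B0 = {y powi (\<beta> ^ j) | j. j \<le> r}"
  have B0A: "B0 \<subseteq> A"
  proof
    fix z assume "z \<in> B0"
    then obtain j where "z = y powi (\<beta> ^ j)" unfolding B0_def by blast
    then show "z \<in> A" using Abj[of j] yA unfolding set_pow_def by blast
  qed
  have AB0: "A \<subseteq> B0"
  proof
    fix z assume zA: "z \<in> A"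
    have zG: "z \<in> mu N" and z1: "z \<noteq> 1" using zA AG A1 by auto
    obtain j where j: "z = w ^ j" using w(1) zG unfolding is_generator_def by blast
    define j0 where "j0 = j mod N"
    have zj0: "z = w ^ j0" using j pow_cong_nat[OF wb(3), of j j0] unfolding j0_def by (simp add: cong_def)
    have j00: "j0 \<noteq> 0"
    proof
      assume "j0 = 0" then have "z = 1" using zj0 by simp
      with z1 show False by simp
    qed
    have j0N: "j0 < N" unfolding j0_def using N0 by simp
    define l where "l = multiplicity p j0"
    obtain e where e: "j0 = p ^ l * e" "\<not> p dvd e"
      using multiplicity_decompose'[of j0 p] j00 p1 unfolding l_def by auto
    have "p ^ l \<le> j0" using e j00 by (simp add: dvd_imp_le)
    then have "p ^ l < p ^ n" using j0N N_def by simp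
    then have ln: "l < n" using power_less_imp_less_exp[OF p1] by blast
    have cep: "coprime e p" using prime_imp_coprime[OF assms(1) e(2)] by (simp add: coprime_commute)
    have ceN: "coprime e N" unfolding N_def using cep by simp
    have gx: "is_generator (mu N) (w ^ e)" using gen_pow_gen[OF N0 w(1) ceN] .
    have "z = (w ^ e) ^ (p ^ l)" using zj0 e(1) by (simp add: power_mult[symmetric] mult.commute)
    then have "z \<in> Bset (mu N) p l" unfolding Bset_def using gx by blast
    then have "A \<in> Pset (mu N) P p l" using zA AinP unfolding Pset_def by blast
    then have "l = k"
    proof (rule contrapos_pp)
      assume "l \<noteq> k"
      then have "Pset (mu N) P p k \<inter> Pset (mu N) P p l = {}" using hyp ln by simp
      then show "A \<notin> Pset (mu N) P p l" using AP by blast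
    qed
    then have zB: "z \<in> Bset (mu N) p k" using \<open>z \<in> Bset (mu N) p l\<close> by simp
    obtain x where x: "is_generator (mu N) x" "z = x ^ (p ^ k)" using zB unfolding Bset_def by blast
    obtain a where a: "x = w ^ a" using w(1) x(1) unfolding is_generator_def by blast
    obtain b where b: "w = x ^ b" using x(1) wb(1) unfolding is_generator_def by blast
    have "w ^ (a * b) = w ^ 1" using a b by (simp add: power_mult)
    then have "[a * b = 1] (mod N)" using gen_pow_eq[OF N0 w(1)] by blast
    then have "coprime (a * b) N" using cong_imp_coprime[OF cong_sym] by fastforce
    then have caN: "coprime a N" by simp
    have zya: "z = y ^ a" using x(2) a w(2) by (simp add: power_mult[symmetric] mult.commute)
    obtain i where i: "[\<alpha> ^ i = int a] (mod int N)" using gu[of "int a"] caN by (auto simp: coprime_int_iff)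
    have zi: "z = y powi (\<alpha> ^ i)" using zya powi_cong[OF y0 yN i] by simp
    define i' where "i' = i mod L"
    have "[\<alpha> ^ i = \<alpha> ^ i'] (mod int N')"
    proof -
      have "\<alpha> ^ i = \<alpha> ^ i' * (\<alpha> ^ L) ^ (i div L)"
      proof -
        have "i = i' + L * (i div L)" unfolding i'_def by simp
        then show ?thesis by (metis power_add power_mult)
      qed
      moreover have "[\<alpha> ^ i' * (\<alpha> ^ L) ^ (i div L) = \<alpha> ^ i' * 1 ^ (i div L)] (mod int N')"
        by (intro cong_mult cong_refl cong_pow eul)
      ultimately show ?thesis by simp
    qed
    then have zi': "z = y powi (\<alpha> ^ i')" using zi powi_cong[OF y0 yN'] by simp
    have "u dvd i'" using key zi' zA by simp
    then obtain c' where c': "i' = u * c'" by blast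
    obtain c where c: "L = u * c" using uL by blast
    have "i' < L" unfolding i'_def using L0 by simp
    then have "c' < c" using c c' by simp
    then have "c' \<le> r" unfolding r_def c using u0 by simp
    moreover have "z = y powi (\<beta> ^ c')" using zi' c' unfolding \<beta>_def by (simp add: power_mult)
    ultimately show "z \<in> B0" unfolding B0_def by blast
  qed
  have "B0 = A" using B0A AB0 by blast
  then show ?thesis
    unfolding Let_def u_def[symmetric] \<beta>_def[symmetric] N'_def[symmetric] L_def[symmetric]
      r_def[symmetric] B0_def[symmetric] by simp
qed

end
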